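(* In the free second-type associative algebra $\mathcal{A}s_2\langle X\rangle$, for all elements $a,b,c,d,e$ the identity \[ abcde=abced-bcaed+bcade \] holds.
   Context: An associative algebra is called of the second type if it satisfies the identity $abc-acb-bac+bca+cab-cba=0$ for all $a,b,c$. $\mathcal{A}s_2\langle X\rangle$ denotes the free algebra of this variety on a countable generating set $X$, over a field of characteristic $0$. *)

theory Defs
  imports Main
begin

text \<open>Noncommutative polynomials over a field 'k in countably many variables
  x_0, x_1, ... (indexed by nat): an element is a coefficient function on words
  (nat lists); polynomials are the finitely supported ones.\<close>

type_synonym 'k ncpoly = "nat list \<Rightarrow> 'k"

definition nczero :: "'k::field ncpoly" where
  "nczero = (\<lambda>w. 0)"

definition ncadd :: "'k::field ncpoly \<Rightarrow> 'k ncpoly \<Rightarrow> 'k ncpoly" where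
  "ncadd p q = (\<lambda>w. p w + q w)"

definition ncsub :: "'k::field ncpoly \<Rightarrow> 'k ncpoly \<Rightarrow> 'k ncpoly" where
  "ncsub p q = (\<lambda>w. p w - q w)"

definition ncsmul :: "'k::field \<Rightarrow> 'k ncpoly \<Rightarrow> 'k ncpoly" where
  "ncsmul c p = (\<lambda>w. c * p w)"

definition ncmul :: "'k::field ncpoly \<Rightarrow> 'k ncpoly \<Rightarrow> 'k ncpoly" where
  "ncmul p q = (\<lambda>w. \<Sum>i\<le>length w. p (take i w) * q (drop i w))"

definition ncpoly :: "'k::field ncpoly set" where
  "ncpoly = {p. finite {w. p w \<noteq> 0}}"

text \<open>The free (non-unital) associative algebra As<X>: polynomials without constant term.\<close>
definition free_assoc :: "'k::field ncpoly set" where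
  "free_assoc = {p \<in> ncpoly. p [] = 0}"

definition second_type_poly :: "'k::field ncpoly \<Rightarrow> 'k ncpoly \<Rightarrow> 'k ncpoly \<Rightarrow> 'k ncpoly" where
  "second_type_poly a b c =
     ncadd (ncsub (ncsub (ncmul (ncmul a b) c) (ncmul (ncmul a c) b)) (ncmul (ncmul b a) c))
       (ncsub (ncadd (ncmul (ncmul b c) a) (ncmul (ncmul c a) b)) (ncmul (ncmul c b) a))"

text \<open>The T-ideal of As<X> generated by the second-type identity: the linear span of
  all u * f(a,b,c) * v with a,b,c in As<X> and u, v polynomials (u, v may be constants,
  which yields one-sided multiples and f(a,b,c) itself).\<close>
inductive_set as2_ideal :: "'k::field ncpoly set" where
  zero: "nczero \<in> as2_ideal"
| add: "x \<in> as2_ideal \<Longrightarrow> y \<in> as2_ideal \<Longrightarrow> ncadd x y \<in> as2_ideal"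
| smult: "x \<in> as2_ideal \<Longrightarrow> ncsmul c x \<in> as2_ideal"
| gen: "u \<in> ncpoly \<Longrightarrow> v \<in> ncpoly \<Longrightarrow> a \<in> free_assoc \<Longrightarrow> b \<in> free_assoc \<Longrightarrow>
        c \<in> free_assoc \<Longrightarrow> ncmul (ncmul u (second_type_poly a b c)) v \<in> as2_ideal"

text \<open>As_2<X> = free_assoc / as2_ideal; equality of classes in As_2<X>.\<close>
definition as2_eq :: "'k::field ncpoly \<Rightarrow> 'k ncpoly \<Rightarrow> bool" where
  "as2_eq p q \<longleftrightarrow> ncsub p q \<in> as2_ideal"

end

theory Submission
  imports Defs
begin

lemma ncmul_assoc: "ncmul (ncmul p q) r = ncmul p (ncmul q r)"
proof (rule ext)
  fix w :: "nat list"
  define n where "n = length w"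
  define g where "g i k = p (take i w) * q (take k (drop i w)) * r (drop (i+k) w)" for i k
  have L: "ncmul (ncmul p q) r w = (\<Sum>j\<le>n. \<Sum>i\<le>j. g i (j-i))"
    unfolding ncmul_def n_def[symmetric]
  proof (rule sum.cong[OF refl])
    fix j assume "j \<in> {..n}"
    then have j: "j \<le> n" by simp
    have "(\<Sum>i\<le>length (take j w). p (take i (take j w)) * q (drop i (take j w))) * r (drop j w)
        = (\<Sum>i\<le>j. p (take i (take j w)) * q (drop i (take j w)) * r (drop j w))"
      using j by (simp add: n_def sum_distrib_right min_def)
    also have "\<dots> = (\<Sum>i\<le>j. g i (j-i))"
      by (rule sum.cong[OF refl]) (simp add: g_def take_take drop_take min_def)
    finally show "(\<Sum>i\<le>length (take j w). p (take i (take j w)) * q (drop i (take j w))) * r (drop j w)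
        = (\<Sum>i\<le>j. g i (j-i))" .
  qed
  have R: "ncmul p (ncmul q r) w = (\<Sum>i\<le>n. \<Sum>k\<le>n-i. g i k)"
    unfolding ncmul_def n_def[symmetric]
    by (simp add: n_def sum_distrib_left g_def drop_drop mult.assoc add.commute)
  have "(\<Sum>i\<le>n. \<Sum>k\<le>n-i. g i k) = (\<Sum>(i,k)\<in>Sigma {..n} (\<lambda>i. {..n-i}). g i k)"
    by (simp add: sum.Sigma)
  also have "Sigma {..n} (\<lambda>i. {..n-i}) = {(i,k). i+k \<le> n}" by auto
  also have "(\<Sum>(i,k)\<in>{(i,k). i+k \<le> n}. g i k) = (\<Sum>j\<le>n. \<Sum>i\<le>j. g i (j-i))"
    by (rule sum.triangle_reindex_eq)
  finally show "ncmul (ncmul p q) r w = ncmul p (ncmul q r) w" using L R by simp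
qed

definition ncone :: "'k::field ncpoly" where "ncone = (\<lambda>w. if w = [] then 1 else 0)"

lemma ncmul_add_left: "ncmul (ncadd p q) r = ncadd (ncmul p r) (ncmul q r)"
  by (rule ext) (simp add: ncmul_def ncadd_def distrib_right sum.distrib)
lemma ncmul_add_right: "ncmul r (ncadd p q) = ncadd (ncmul r p) (ncmul r q)"
  by (rule ext) (simp add: ncmul_def ncadd_def distrib_left sum.distrib)

lemma ncone_mul: "ncmul ncone p = p"
proof (rule ext)
  fix w :: "nat list"
  show "ncmul ncone p w = p w"
  proof (cases w)
    case Nil then show ?thesis by (simp add: ncmul_def ncone_def)
  next
    case (Cons x xs)
    then show ?thesis unfolding ncmul_def ncone_def
      by (simp add: sum.atMost_shift del: sum.atMost_Suc)
  qed
qed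

lemma mul_ncone: "ncmul p ncone = p"
proof (rule ext)
  fix w :: "nat list"
  have "ncmul p ncone w = (\<Sum>i<length w. p (take i w) * ncone (drop i w)) + p w"
    unfolding ncmul_def by (simp add: lessThan_Suc_atMost[symmetric] ncone_def)
  also have "(\<Sum>i<length w. p (take i w) * ncone (drop i w)) = 0"
    by (rule sum.neutral) (simp add: ncone_def)
  finally show "ncmul p ncone w = p w" by (simp add: ncone_def)
qed

lemma ncmul_finite: assumes "p \<in> ncpoly" "q \<in> ncpoly" shows "ncmul p q \<in> ncpoly"
proof -
  let ?P = "{w. p w \<noteq> 0}" and ?Q = "{w. q w \<noteq> 0}"
  have "{w. ncmul p q w \<noteq> 0} \<subseteq> (\<lambda>(u,v). u @ v) ` (?P \<times> ?Q)"
  proof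
    fix w assume "w \<in> {w. ncmul p q w \<noteq> 0}"
    then obtain i where "p (take i w) * q (drop i w) \<noteq> 0"
      unfolding ncmul_def by (auto elim: sum.not_neutral_contains_not_neutral)
    then have "(take i w, drop i w) \<in> ?P \<times> ?Q" by auto
    then show "w \<in> (\<lambda>(u,v). u @ v) ` (?P \<times> ?Q)" by (metis (no_types, lifting) append_take_drop_id case_prod_conv image_eqI)
  qed
  moreover have "finite ((\<lambda>(u,v). u @ v) ` (?P \<times> ?Q))" using assms by (simp add: ncpoly_def)
  ultimately show ?thesis unfolding ncpoly_def by (auto intro: finite_subset)
qed

lemma ncmul_free: assumes "p \<in> free_assoc" "q \<in> ncpoly" shows "ncmul p q \<in> free_assoc"
  using assms ncmul_finite[of p q] by (simp add: free_assoc_def ncmul_def)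

lemma ncone_poly: "(ncone :: 'k::field ncpoly) \<in> ncpoly"
proof -
  have "{w. (ncone :: 'k ncpoly) w \<noteq> 0} = {[]}" by (auto simp: ncone_def)
  then show ?thesis by (simp add: ncpoly_def)
qed

typedef (overloaded) 'k nc = "UNIV :: ('k::field ncpoly) set" by simp

instantiation nc :: (field) ring_1
begin
definition "zero_nc = Abs_nc nczero"
definition "one_nc = Abs_nc ncone"
definition "plus_nc x y = Abs_nc (ncadd (Rep_nc x) (Rep_nc y))"
definition "minus_nc x y = Abs_nc (ncsub (Rep_nc x) (Rep_nc y))"
definition "uminus_nc x = Abs_nc (\<lambda>w. - Rep_nc x w)"
definition "times_nc x y = Abs_nc (ncmul (Rep_nc x) (Rep_nc y))"
instance
proof
  fix a b c :: "'a nc"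
  note defs0 = zero_nc_def one_nc_def plus_nc_def minus_nc_def uminus_nc_def times_nc_def
     Abs_nc_inverse[OF UNIV_I] Rep_nc_inject[symmetric]
  note defs = defs0 nczero_def ncadd_def ncsub_def
  show "a * b * c = a * (b * c)" by (simp add: defs ncmul_assoc)
  show "(a + b) * c = a * c + b * c" by (simp add: defs0 ncmul_add_left)
  show "a * (b + c) = a * b + a * c" by (simp add: defs0 ncmul_add_right)
  show "1 * a = a" by (simp add: defs ncone_mul Rep_nc_inverse)
  show "a * 1 = a" by (simp add: defs mul_ncone Rep_nc_inverse)
  show "a + b + c = a + (b + c)" by (simp add: defs add.assoc)
  show "a + b = b + a" by (simp add: defs add.commute)
  show "0 + a = a" by (simp add: defs)
  show "- a + a = 0" by (simp add: defs)
  show "a - b = a + - b" by (simp add: defs)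
  show "(0::'a nc) \<noteq> 1" by (simp add: defs ncone_def fun_eq_iff)
qed
end

lemma Rep_nc_simps:
  "Rep_nc (x + y) = ncadd (Rep_nc x) (Rep_nc y)"
  "Rep_nc (x - y) = ncsub (Rep_nc x) (Rep_nc y)"
  "Rep_nc (x * y) = ncmul (Rep_nc x) (Rep_nc y)"
  "Rep_nc 1 = ncone"
  "Rep_nc 0 = nczero"
  "Rep_nc (Abs_nc p) = p"
  by (simp_all add: zero_nc_def one_nc_def plus_nc_def minus_nc_def times_nc_def Abs_nc_inverse)

lemma Rep_of_int: "Rep_nc (of_int n * x) = ncsmul (of_int n) (Rep_nc x)"
proof (induction n rule: int_induct[where k=0])
  case base then show ?case by (simp add: Rep_nc_simps ncsmul_def ncmul_def nczero_def)
next
  case (step1 i)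
  have "Rep_nc (of_int (i+1) * x) = ncadd (Rep_nc (of_int i * x)) (Rep_nc x)"
    by (simp add: distrib_right Rep_nc_simps)
  then show ?case using step1 by (simp add: ncadd_def ncsmul_def fun_eq_iff distrib_right)
next
  case (step2 i)
  have "Rep_nc (of_int (i-1) * x) = ncsub (Rep_nc (of_int i * x)) (Rep_nc x)"
    by (simp add: left_diff_distrib Rep_nc_simps)
  then show ?case using step2 by (simp add: ncsub_def ncsmul_def fun_eq_iff left_diff_distrib)
qed

type_synonym fp = "(int \<times> nat list) list"

definition feval :: "(nat \<Rightarrow> 'r::ring_1) \<Rightarrow> fp \<Rightarrow> 'r" where
  "feval f P = sum_list (map (\<lambda>(c,v). of_int c * prod_list (map f v)) P)"

definition fmul :: "fp \<Rightarrow> fp \<Rightarrow> fp" where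
  "fmul P Q = concat (map (\<lambda>(c,v). map (\<lambda>(d,w). (c*d, v@w)) Q) P)"

definition fsc :: "int \<Rightarrow> fp \<Rightarrow> fp" where
  "fsc k P = map (\<lambda>(c,v). (k*c, v)) P"

lemma feval_Nil[simp]: "feval f [] = 0" by (simp add: feval_def)
lemma feval_Cons[simp]: "feval f ((c,v)#P) = of_int c * prod_list (map f v) + feval f P"
  by (simp add: feval_def)
lemma feval_append[simp]: "feval f (P @ Q) = feval f P + feval f Q"
  by (simp add: feval_def)

lemma feval_fsc[simp]: "feval f (fsc k P) = of_int k * feval f P"
  by (induction P) (auto simp: fsc_def distrib_left mult.assoc)

lemma feval_map_aux: "feval f (map (\<lambda>(d,w). (c*d, v@w)) Q) = of_int c * prod_list (map f v) * feval f Q"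
proof (induction Q)
  case Nil then show ?case by simp
next
  case (Cons x Q)
  obtain d w where x: "x = (d,w)" by (cases x)
  have "of_int (c*d) * prod_list (map f (v@w)) = of_int c * prod_list (map f v) * (of_int d * prod_list (map f w))"
    by (simp add: mult.assoc mult_of_int_commute[of d])
  then show ?case using Cons by (simp add: x distrib_left)
qed

lemma feval_fmul[simp]: "feval f (fmul P Q) = feval f P * feval f Q"
proof (induction P)
  case Nil then show ?case by (simp add: fmul_def)
next
  case (Cons x P)
  obtain c v where x: "x = (c,v)" by (cases x)
  have "feval f (fmul (x#P) Q) = feval f (map (\<lambda>(d,w). (c*d, v@w)) Q) + feval f (fmul P Q)"
    by (simp add: fmul_def x feval_def)
  then show ?case using Cons by (simp add: feval_map_aux x distrib_right)
qed

fun addc :: "int \<times> nat list \<Rightarrow> fp \<Rightarrow> fp" where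
  "addc (c,w) [] = (if c = 0 then [] else [(c,w)])"
| "addc (c,w) ((d,v)#Q) = (if w = v then (if c + d = 0 then Q else (c+d,v)#Q) else (d,v) # addc (c,w) Q)"

lemma feval_addc: "feval f (addc (c,w) Q) = of_int c * prod_list (map f w) + feval f Q"
proof (induction Q)
  case Nil then show ?case by simp
next
  case (Cons x Q)
  obtain d v where x: "x = (d,v)" by (cases x)
  show ?case
  proof (cases "w = v")
    case True
    have e: "of_int c * prod_list (map f v) + of_int d * prod_list (map f v) = of_int (c+d) * prod_list (map f v)"
      by (simp add: distrib_right)
    show ?thesis
    proof (cases "c + d = 0")
      case True
      then show ?thesis using \<open>w = v\<close> e by (simp add: x add.assoc[symmetric])
    next
      case False
      then show ?thesis using \<open>w = v\<close> e by (simp add: x add.assoc[symmetric])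
    qed
  next
    case False
    then show ?thesis using Cons by (simp add: x algebra_simps)
  qed
qed

fun fnorm :: "fp \<Rightarrow> fp" where
  "fnorm [] = []"
| "fnorm (x#P) = addc x (fnorm P)"

lemma feval_fnorm: "feval f (fnorm P) = feval f P"
proof (induction P)
  case Nil then show ?case by simp
next
  case (Cons x P)
  obtain c v where x: "x = (c,v)" by (cases x)
  show ?case using Cons by (simp add: x feval_addc)
qed

lemma feval_zero: "fnorm P = [] \<Longrightarrow> feval f P = 0"
  using feval_fnorm[of f P] by simp

definition fw :: "nat list \<Rightarrow> fp" where "fw w = [(1,w)]"

definition fS :: "fp \<Rightarrow> fp \<Rightarrow> fp \<Rightarrow> fp" where
  "fS x y z = fmul (fmul x y) z @ fsc (-1) (fmul (fmul x z) y) @ fsc (-1) (fmul (fmul y x) z)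
     @ fmul (fmul y z) x @ fmul (fmul z x) y @ fsc (-1) (fmul (fmul z y) x)"

definition rS :: "'r::ring_1 \<Rightarrow> 'r \<Rightarrow> 'r \<Rightarrow> 'r" where
  "rS x y z = (x*y*z - x*z*y - y*x*z) + (y*z*x + z*x*y - z*y*x)"

lemma feval_fS[simp]: "feval f (fS x y z) = rS (feval f x) (feval f y) (feval f z)"
  by (simp add: fS_def rS_def algebra_simps)

lemma feval_fw[simp]: "feval f (fw w) = prod_list (map f w)"
  by (simp add: fw_def)

type_synonym gentry = "int \<times> nat list \<times> nat list \<times> nat list \<times> nat list \<times> nat list"

fun gall :: "gentry list \<Rightarrow> fp" where
  "gall [] = []"
| "gall ((n,u,m1,m2,m3,v)#G) = fsc n (fmul (fmul (fw u) (fS (fw m1) (fw m2) (fw m3))) (fw v)) @ gall G"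

fun gvalid :: "gentry list \<Rightarrow> bool" where
  "gvalid [] = True"
| "gvalid ((n,u,m1,m2,m3,v)#G) = (m1 \<noteq> [] \<and> m2 \<noteq> [] \<and> m3 \<noteq> [] \<and> gvalid G)"

definition gens :: "gentry list" where "gens = [
(18,[],[0],[1],[2,3],[4]),
(-2,[],[0,1,2],[3],[4],[]),
(-22,[],[0],[1],[2,3,4],[]),
(-5,[],[0],[1,2],[3],[4]),
(9,[],[0],[1,2],[3,4],[]),
(13,[],[0],[1,2,3],[4],[]),
(-3,[],[0],[1,2,4],[3],[]),
(4,[],[0],[1,2],[4,3],[]),
(1,[0],[1],[2,3],[4],[]),
(17,[],[0,1],[2,3],[4],[]),
(-22,[0],[1,2],[3],[4],[]),
(-16,[],[0],[1,2],[4],[3]),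
(-6,[],[0,2],[1],[3],[4]),
(1,[0],[1],[2],[3,4],[]),
(-17,[],[0,1],[2],[3,4],[]),
(21,[],[0,1],[2],[3],[4]),
(-15,[],[0,1],[2,4],[3],[]),
(10,[],[0],[1],[4,2,3],[]),
(-4,[],[0],[1],[4,2],[3]),
(22,[0],[1,3],[2],[4],[]),
(9,[],[0],[1],[2,4],[3]),
(7,[],[0],[1,3,2],[4],[]),
(-8,[0],[1],[3,2],[4],[]),
(20,[],[0,1],[2],[4,3],[]),
(-12,[],[0,1],[2],[4],[3]),
(7,[],[0],[1],[3,2],[4]),
(-10,[0],[1],[2,4],[3],[]),
(-1,[],[0],[1],[2,4,3],[]),
(-9,[],[0],[1],[3,2,4],[]),
(-11,[],[0,1],[3,2],[4],[]),
(2,[],[0],[1,3],[2,4],[]),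
(-14,[],[0,1,3],[2],[4],[]),
(-2,[],[0],[1,3],[4,2],[]),
(2,[],[0],[1,3],[4],[2]),
(-20,[],[0,1],[3],[4,2],[]),
(16,[],[0,1],[3],[4],[2]),
(6,[],[0],[1,4,2],[3],[]),
(12,[],[0],[1],[3,4,2],[]),
(-6,[],[0],[1],[3,4],[2]),
(9,[],[0],[1,4],[2],[3]),
(-12,[0],[1],[2],[4,3],[]),
(-10,[],[0],[1,3,4],[2],[]),
(-16,[],[0],[1,4],[2,3],[]),
(-13,[0],[1,4],[2],[3],[]),
(-6,[],[0,1,4],[2],[3],[]),
(-3,[],[0],[1,4],[3,2],[]),
(-4,[],[0],[1,4],[3],[2]),
(10,[],[0],[1],[4,3,2],[]),
(-10,[],[0],[1],[4,3],[2]),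
(2,[],[0],[2,1,3],[4],[]),
(9,[],[0,2],[1],[4],[3]),
(-7,[],[0],[2,1],[4,3],[]),
(1,[],[0],[2,1],[4],[3]),
(-7,[],[0],[1,4,3],[2],[]),
(-12,[],[0],[2,1],[3,4],[]),
(2,[],[0],[2,1],[3],[4]),
(-26,[],[0,2],[1,3],[4],[]),
(20,[],[0,2],[1],[3,4],[]),
(14,[],[0,2,1],[3],[4],[]),
(19,[0],[2,1],[3],[4],[]),
(2,[],[0,2,3],[1],[4],[]),
(-11,[],[0,2],[1],[4,3],[]),
(-4,[],[0],[2,3,1],[4],[]),
(-12,[],[0],[2],[3,1,4],[]),
(8,[],[0],[2],[3,1],[4]),
(18,[],[0,2],[1,4],[3],[]),
(20,[],[0,2],[3,1],[4],[]),
(-7,[],[0],[2],[4,1,3],[]),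
(7,[],[0],[2],[4,1],[3]),
(14,[0],[2],[3,1],[4],[]),
(17,[],[0,2],[3],[4,1],[]),
(-31,[],[0,2],[3],[4],[1]),
(-9,[],[0],[2],[3,4,1],[]),
(9,[],[0],[2],[3,4],[1]),
(-13,[],[0],[2,3],[4,1],[]),
(13,[],[0],[2,3],[4],[1]),
(12,[0],[2],[3],[4,1],[]),
(-18,[],[0,2,4],[1],[3],[]),
(-3,[],[0],[3,1,2],[4],[]),
(-1,[],[0],[2],[4,3,1],[]),
(1,[],[0],[2],[4,3],[1]),
(1,[],[0,3],[1],[2],[4]),
(9,[],[0],[2,4,1],[3],[]),
(9,[],[0,3],[1,2],[4],[]),
(-5,[],[0],[2,4],[3],[1]),
(-5,[],[0,3],[1],[2,4],[]),
(-6,[],[0],[3,1],[4,2],[]),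
(6,[],[0],[3,1],[4],[2]),
(-3,[],[0],[3,2,1],[4],[]),
(-12,[],[0,3],[1],[4],[2]),
(6,[],[0,3],[1],[4,2],[]),
(-5,[],[0,3],[1,4],[2],[]),
(3,[],[0,3],[2,1],[4],[]),
(6,[],[1,0],[2],[3],[4]),
(6,[],[1,0,2],[3],[4],[]),
(-6,[],[1,0],[2],[4],[3]),
(12,[],[1,0],[2],[4,3],[]),
(-12,[],[1,0],[3,2],[4],[]),
(-12,[],[1,0],[2,4],[3],[])]"

definition tf :: fp where
  "tf = [(1,[0,1,2,3,4]),(-1,[0,1,2,4,3]),(1,[1,2,0,4,3]),(-1,[1,2,0,3,4])]"

lemma gvalid_gens: "gvalid gens"
  by (simp add: gens_def)

lemma formal_identity: "fnorm (fsc 12 tf @ fsc (-1) (gall gens)) = []"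
  by code_simp

lemma W_poly:
  assumes "\<And>i. Rep_nc (f i) \<in> free_assoc"
  shows "Rep_nc (prod_list (map f u)) \<in> ncpoly \<and> (u \<noteq> [] \<longrightarrow> Rep_nc (prod_list (map f u)) \<in> free_assoc)"
proof (induction u)
  case Nil then show ?case by (simp add: Rep_nc_simps ncone_poly)
next
  case (Cons i u)
  have fi: "Rep_nc (f i) \<in> free_assoc" by (rule assms)
  have "Rep_nc (prod_list (map f (i#u))) = ncmul (Rep_nc (f i)) (Rep_nc (prod_list (map f u)))"
    by (simp add: Rep_nc_simps)
  moreover have "ncmul (Rep_nc (f i)) (Rep_nc (prod_list (map f u))) \<in> free_assoc"
    using Cons fi ncmul_free by blast
  ultimately show ?case by (simp add: free_assoc_def)
qed

lemma Rep_rS: "Rep_nc (rS x y z) = second_type_poly (Rep_nc x) (Rep_nc y) (Rep_nc z)"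
  by (simp add: rS_def second_type_poly_def Rep_nc_simps)

lemma gall_ideal:
  assumes "\<And>i. Rep_nc (f i) \<in> free_assoc"
  shows "gvalid G \<Longrightarrow> Rep_nc (feval f (gall G)) \<in> as2_ideal"
proof (induction G rule: gall.induct)
  case 1 then show ?case by (simp add: Rep_nc_simps as2_ideal.zero)
next
  case (2 n u m1 m2 m3 v G)
  let ?W = "\<lambda>u. prod_list (map f u)"
  have g: "Rep_nc (?W u * rS (?W m1) (?W m2) (?W m3) * ?W v) \<in> as2_ideal"
    unfolding Rep_nc_simps Rep_rS
    by (rule as2_ideal.gen) (use W_poly[of f, OF assms] 2 in auto)
  have "Rep_nc (feval f (gall ((n,u,m1,m2,m3,v)#G)))
      = ncadd (ncsmul (of_int n) (Rep_nc (?W u * rS (?W m1) (?W m2) (?W m3) * ?W v))) (Rep_nc (feval f (gall G)))"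
    by (simp add: Rep_nc_simps(1) Rep_of_int)
  then show ?case using g 2 by (simp add: as2_ideal.add as2_ideal.smult)
qed

definition fsel :: "'k::field ncpoly \<Rightarrow> 'k ncpoly \<Rightarrow> 'k ncpoly \<Rightarrow> 'k ncpoly \<Rightarrow> 'k ncpoly \<Rightarrow> nat \<Rightarrow> 'k nc" where
  "fsel a b c d e i = Abs_nc (if i < 5 then [a,b,c,d,e] ! i else nczero)"

theorem mainTheorem2:
  fixes a b c d e :: "'k::field_char_0 ncpoly"
  assumes "a \<in> free_assoc" "b \<in> free_assoc" "c \<in> free_assoc"
    "d \<in> free_assoc" "e \<in> free_assoc"
  shows "as2_eq (ncmul (ncmul (ncmul (ncmul a b) c) d) e)
           (ncadd (ncsub (ncmul (ncmul (ncmul (ncmul a b) c) e) d)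
                         (ncmul (ncmul (ncmul (ncmul b c) a) e) d))
                  (ncmul (ncmul (ncmul (ncmul b c) a) d) e))"
proof -
  define f where "f = fsel a b c d e"
  define A where "A = (Abs_nc a :: 'k nc)"
  define B where "B = (Abs_nc b :: 'k nc)"
  define C where "C = (Abs_nc c :: 'k nc)"
  define D where "D = (Abs_nc d :: 'k nc)"
  define E where "E = (Abs_nc e :: 'k nc)"
  have z: "(nczero :: 'k ncpoly) \<in> free_assoc"
    by (simp add: free_assoc_def ncpoly_def nczero_def)
  have fa: "Rep_nc (f i) \<in> free_assoc" for i
  proof (cases "i < 5")
    case True
    then have "i = 0 \<or> i = 1 \<or> i = 2 \<or> i = 3 \<or> i = 4" by auto
    then show ?thesis using assms by (auto simp: f_def fsel_def Rep_nc_simps)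
  qed (simp add: f_def fsel_def Rep_nc_simps z)
  have f0: "f 0 = A" "f (Suc 0) = B" "f (Suc (Suc 0)) = C" "f (Suc (Suc (Suc 0))) = D" "f (Suc (Suc (Suc (Suc 0)))) = E"
    by (simp_all add: f_def fsel_def A_def B_def C_def D_def E_def numeral_eq_Suc)
  define X where "X = A*B*C*D*E"
  define Y where "Y = (A*B*C*E*D - B*C*A*E*D) + B*C*A*D*E"
  have tfe: "feval f tf = X - Y"
    by (simp add: tf_def f0 X_def Y_def algebra_simps numeral_eq_Suc)
  have "feval f (fsc 12 tf @ fsc (-1) (gall gens)) = 0"
    by (rule feval_zero[OF formal_identity])
  then have "of_int 12 * (X - Y) = feval f (gall gens)"
    by (simp add: tfe)
  then have "Rep_nc (of_int 12 * (X - Y)) \<in> as2_ideal"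
    using gall_ideal[OF fa gvalid_gens] by simp
  then have "ncsmul (of_int 12) (Rep_nc (X - Y)) \<in> as2_ideal"
    by (simp only: Rep_of_int)
  then have "ncsmul (1/12) (ncsmul (of_int 12) (Rep_nc (X - Y))) \<in> as2_ideal"
    by (rule as2_ideal.smult)
  moreover have "ncsmul (1/12) (ncsmul (of_int 12) (Rep_nc (X - Y))) = Rep_nc (X - Y)"
    by (simp add: ncsmul_def fun_eq_iff)
  ultimately have "Rep_nc (X - Y) \<in> as2_ideal" by simp
  then show ?thesis
    by (simp add: as2_eq_def X_def Y_def Rep_nc_simps A_def B_def C_def D_def E_def)
qed

end
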